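(* Let $c>0$ and $\Omega_0=\{(u,v,A): 0\le A\le 1;\ u,v\ge 0;\ uv\le 1\}$. There is no twice differentiable function $B_0$ on $\Omega_0$ such that $-d^2B_0\ge 0$ (nonpositive definite Hessian), $\frac{\partial B_0}{\partial A}\ge c\,u^2v$, and $0\le B_0\le u$ on $\Omega_0$. *)

theory Defs
  imports "HOL-Analysis.Analysis"
begin

definition Omega0 :: "(real \<times> real \<times> real) set" where
  "Omega0 = {(u, v, A). 0 \<le> A \<and> A \<le> 1 \<and> 0 \<le> u \<and> 0 \<le> v \<and> u * v \<le> 1}"

end

theory Submission imports Defs begin

lemma concave_line:
  fixes B :: "'a::real_normed_vector \<Rightarrow> real" and DB :: "'a \<Rightarrow> 'a \<Rightarrow>\<^sub>L real"
    and D2B :: "'a \<Rightarrow> 'a \<Rightarrow>\<^sub>L ('a \<Rightarrow>\<^sub>L real)"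
  assumes D: "\<forall>p\<in>S. (B has_derivative blinfun_apply (DB p)) (at p within S)
                \<and> (DB has_derivative blinfun_apply (D2B p)) (at p within S)"
    and N: "\<forall>p\<in>S. \<forall>h. blinfun_apply (blinfun_apply (D2B p) h) h \<le> 0"
    and seg: "\<And>t. 0 \<le> t \<Longrightarrow> t \<le> 1 \<Longrightarrow> p + t *\<^sub>R d \<in> S"
  shows "B (p + d) \<le> B p + blinfun_apply (DB p) d"
proof -
  define \<phi> where "\<phi> t = B (p + t *\<^sub>R d)" for t
  define \<psi> where "\<psi> t = blinfun_apply (DB (p + t *\<^sub>R d)) d" for t
  have L: "((\<lambda>t. p + t *\<^sub>R d) has_derivative (\<lambda>h. h *\<^sub>R d)) (at t within {0..1})" for t
    by (auto intro!: derivative_eq_intros)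
  have img: "(\<lambda>t. p + t *\<^sub>R d) ` {0..1} \<subseteq> S" using seg by auto
  have dphi: "(\<phi> has_real_derivative \<psi> t) (at t within {0..1})" if "t \<in> {0..1}" for t
  proof -
    have "((\<lambda>t. B (p + t *\<^sub>R d)) has_derivative (\<lambda>h. blinfun_apply (DB (p + t *\<^sub>R d)) (h *\<^sub>R d))) (at t within {0..1})"
      apply (rule has_derivative_in_compose[OF L])
      apply (rule has_derivative_subset[OF _ img])
      using D seg that by auto
    then show ?thesis unfolding \<phi>_def \<psi>_def has_field_derivative_def
      by (simp add: blinfun.scaleR_right mult.commute[of _ "blinfun_apply (DB (p + t *\<^sub>R d)) d"])
  qed
  have dpsi: "(\<psi> has_real_derivative (blinfun_apply (blinfun_apply (D2B (p + t *\<^sub>R d)) d) d)) (at t within {0..1})"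
    if "t \<in> {0..1}" for t
  proof -
    have "((\<lambda>t. DB (p + t *\<^sub>R d)) has_derivative (\<lambda>h. blinfun_apply (D2B (p + t *\<^sub>R d)) (h *\<^sub>R d))) (at t within {0..1})"
      apply (rule has_derivative_in_compose[OF L])
      apply (rule has_derivative_subset[OF _ img])
      using D seg that by auto
    then have "((\<lambda>t. blinfun_apply (DB (p + t *\<^sub>R d)) d) has_derivative
        (\<lambda>h. blinfun_apply (blinfun_apply (D2B (p + t *\<^sub>R d)) (h *\<^sub>R d)) d)) (at t within {0..1})"
      by (rule bounded_linear.has_derivative[OF blinfun.bounded_linear_left])
    then show ?thesis unfolding \<psi>_def has_field_derivative_def
      by (simp add: blinfun.scaleR_right blinfun.scaleR_left mult.commute[of _ "blinfun_apply (blinfun_apply (D2B (p + t *\<^sub>R d)) d) d"])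
  qed
  have contpsi: "continuous_on {0..1} \<psi>"
    using dpsi DERIV_continuous continuous_on_eq_continuous_within by blast
  have contphi: "continuous_on {0..1} \<phi>"
    using dphi DERIV_continuous continuous_on_eq_continuous_within by blast
  have mono: "\<psi> t \<le> \<psi> 0" if "0 \<le> t" "t \<le> 1" for t
  proof (rule DERIV_nonpos_imp_decreasing_open[OF that(1)])
    fix x assume x: "0 < x" "x < t"
    then have "(\<psi> has_real_derivative (blinfun_apply (blinfun_apply (D2B (p + x *\<^sub>R d)) d) d)) (at x)"
      using dpsi[of x] at_within_Icc_at[of 0 x 1] that by auto
    moreover have "blinfun_apply (blinfun_apply (D2B (p + x *\<^sub>R d)) d) d \<le> 0"
      using N seg[of x] x that by auto
    ultimately show "\<exists>y. (\<psi> has_real_derivative y) (at x) \<and> y \<le> 0" by blast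
  next
    show "continuous_on {0..t} \<psi>" using contpsi that continuous_on_subset by fastforce
  qed
  define gg where "gg t = \<phi> t - t * \<psi> 0" for t
  have "gg 1 \<le> gg 0"
  proof (rule DERIV_nonpos_imp_decreasing_open[OF zero_le_one])
    fix x :: real assume x: "0 < x" "x < 1"
    then have "(\<phi> has_real_derivative \<psi> x) (at x)"
      using dphi[of x] at_within_Icc_at[of 0 x 1] by auto
    then have "(gg has_real_derivative \<psi> x - \<psi> 0) (at x)"
      unfolding gg_def by (auto intro!: derivative_eq_intros)
    then show "\<exists>y. (gg has_real_derivative y) (at x) \<and> y \<le> 0" using mono[of x] x by auto
  next
    show "continuous_on {0..1} gg" unfolding gg_def
      by (intro continuous_intros contphi)
  qed
  then show ?thesis unfolding gg_def \<phi>_def \<psi>_def by simp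
qed

lemma face_zero:
  fixes B :: "'a::real_normed_vector \<Rightarrow> real"
  assumes D: "(B has_derivative blinfun_apply L) (at 0 within S)"
    and W: "\<And>t. 0 \<le> t \<Longrightarrow> t \<le> 1 \<Longrightarrow> t *\<^sub>R w \<in> S"
    and Z: "\<And>t. 0 \<le> t \<Longrightarrow> t \<le> 1 \<Longrightarrow> B (t *\<^sub>R w) = 0"
  shows "blinfun_apply L w = 0"
proof -
  have L: "((\<lambda>t. t *\<^sub>R w) has_derivative (\<lambda>h. h *\<^sub>R w)) (at 0 within {0..1})"
    by (auto intro!: derivative_eq_intros)
  have img: "(\<lambda>t. t *\<^sub>R w) ` {0..1} \<subseteq> S" using W by auto
  have "(B has_derivative blinfun_apply L) (at ((\<lambda>t. t *\<^sub>R w) 0) within (\<lambda>t. t *\<^sub>R w) ` {0..1})"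
    using has_derivative_subset[OF D img] by simp
  from has_derivative_in_compose[OF L this]
  have "((\<lambda>t. B (t *\<^sub>R w)) has_vector_derivative blinfun_apply L w) (at 0 within {0..1})"
    unfolding has_vector_derivative_def by (simp add: blinfun.scaleR_right)
  moreover have "((\<lambda>t. B (t *\<^sub>R w)) has_vector_derivative 0) (at 0 within {0..1})"
    by (rule has_vector_derivative_transform_within[where f="\<lambda>_. 0" and d=1])
       (auto simp: Z)
  ultimately show ?thesis
    using vector_derivative_unique_within_closed_interval[of 0 1 0] by auto
qed

theorem mainTheorem7:
  fixes c :: real
  assumes "c > 0"
  shows "\<not> (\<exists>(B :: real \<times> real \<times> real \<Rightarrow> real) DB D2B.
     (\<forall>p\<in>Omega0. (B has_derivative blinfun_apply (DB p)) (at p within Omega0)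
                \<and> (DB has_derivative blinfun_apply (D2B p)) (at p within Omega0))
   \<and> (\<forall>p\<in>Omega0. \<forall>h. blinfun_apply (blinfun_apply (D2B p) h) h \<le> 0)
   \<and> (\<forall>u v A. (u, v, A) \<in> Omega0 \<longrightarrow>
          blinfun_apply (DB (u, v, A)) (0, 0, 1) \<ge> c * u\<^sup>2 * v
        \<and> 0 \<le> B (u, v, A) \<and> B (u, v, A) \<le> u))"
proof (rule notI, elim exE conjE)
  fix B :: "real \<times> real \<times> real \<Rightarrow> real" and DB D2B
  assume D: "\<forall>p\<in>Omega0. (B has_derivative blinfun_apply (DB p)) (at p within Omega0)
                \<and> (DB has_derivative blinfun_apply (D2B p)) (at p within Omega0)"
    and N: "\<forall>p\<in>Omega0. \<forall>h. blinfun_apply (blinfun_apply (D2B p) h) h \<le> 0"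
    and H': "\<forall>u v A. (u, v, A) \<in> Omega0 \<longrightarrow>
          blinfun_apply (DB (u, v, A)) (0, 0, 1) \<ge> c * u\<^sup>2 * v
        \<and> 0 \<le> B (u, v, A) \<and> B (u, v, A) \<le> u"
  have H: "\<And>u v A. (u, v, A) \<in> Omega0 \<Longrightarrow>
          blinfun_apply (DB (u, v, A)) (0, 0, 1) \<ge> c * u\<^sup>2 * v
        \<and> 0 \<le> B (u, v, A) \<and> B (u, v, A) \<le> u" using H' by blast
  note conc = concave_line[OF D N]
  have O0: "(0::real\<times>real\<times>real) \<in> Omega0" by (simp add: Omega0_def zero_prod_def)
  have DB0: "(B has_derivative blinfun_apply (DB 0)) (at 0 within Omega0)" using D O0 by blast
  have B0: "B (0, v, A) = 0" if "(0, v, A) \<in> Omega0" for v A using H[OF that] by auto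
  have zv: "blinfun_apply (DB 0) (0, 1, 0) = 0"
    by (rule face_zero[OF DB0]) (auto simp: Omega0_def B0)
  have zA: "blinfun_apply (DB 0) (0, 0, 1) = 0"
    by (rule face_zero[OF DB0]) (auto simp: Omega0_def B0)
  define a where "a = blinfun_apply (DB 0) (1, 0, 0)"
  have key: "B (t, 0, 0) \<le> t * (a - c)" if t: "0 < t" "t \<le> 1" for t
  proof -
    define u where "u = t / 2"
    have u: "0 < u" "u \<le> 1/2" using t by (auto simp: u_def)
    have uu: "u * (1/u) = 1" using u by simp
    have "B ((u, 1/u, 1) + (0, 0, -1)) \<le> B (u, 1/u, 1) + blinfun_apply (DB (u, 1/u, 1)) (0, 0, -1)"
      by (rule conc) (use u in \<open>auto simp: Omega0_def\<close>)
    moreover have "blinfun_apply (DB (u, 1/u, 1)) (0, 0, -1) = - blinfun_apply (DB (u, 1/u, 1)) (0, 0, 1)"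
      using blinfun.minus_right[of "DB (u, 1/u, 1)" "(0,0,1)"] by simp
    moreover have "c * u\<^sup>2 * (1/u) \<le> blinfun_apply (DB (u, 1/u, 1)) (0, 0, 1)"
      using H[of u "1/u" 1] u by (auto simp: Omega0_def)
    moreover have "c * u\<^sup>2 * (1/u) = c * u" using u by (simp add: power2_eq_square)
    ultimately have A: "B (u, 1/u, 0) \<le> B (u, 1/u, 1) - c * u" by simp
    have "B (0 + (u, 1/u, 1)) \<le> B 0 + blinfun_apply (DB 0) (u, 1/u, 1)"
    proof (rule conc)
      fix t :: real assume t: "0 \<le> t" "t \<le> 1"
      have "t * u * (t * (1/u)) = t * t" using u by (simp add: field_simps)
      also have "\<dots> \<le> 1" using t by (simp add: mult_le_one)
      finally show "0 + t *\<^sub>R (u, 1/u, 1) \<in> Omega0" using t u by (simp add: Omega0_def)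
    qed
    moreover have "blinfun_apply (DB 0) (u, 1/u, 1) = u * a"
    proof -
      have e: "(u, 1/u, 1::real) = u *\<^sub>R (1,0,0) + (1/u) *\<^sub>R (0,1,0) + (0,0,1)" by simp
      show ?thesis by (subst e, simp only: blinfun.add_right blinfun.scaleR_right zv zA a_def) simp
    qed
    moreover have "B 0 = 0" using H[of 0 0 0] by (simp add: Omega0_def zero_prod_def)
    ultimately have Bb: "B (u, 1/u, 1) \<le> u * a" by simp
    have c1: "B ((u, 1/u, 0) + (-u, 1/u, 0)) \<le> B (u, 1/u, 0) + blinfun_apply (DB (u, 1/u, 0)) (-u, 1/u, 0)"
    proof (rule conc)
      fix t :: real assume t: "0 \<le> t" "t \<le> 1"
      have "(u + t * - u) * (1/u + t * (1/u)) = (1 - t) * (1 + t)" using u by (simp add: field_simps)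
      also have "\<dots> \<le> 1" using t by (simp add: algebra_simps)
      finally show "(u, 1/u, 0) + t *\<^sub>R (-u, 1/u, 0) \<in> Omega0" using t u
        by (simp add: Omega0_def mult_le_one)
    qed
    have c2: "B ((u, 1/u, 0) + (u, -1/u, 0)) \<le> B (u, 1/u, 0) + blinfun_apply (DB (u, 1/u, 0)) (u, -1/u, 0)"
    proof (rule conc)
      fix t :: real assume t: "0 \<le> t" "t \<le> 1"
      have "(u + t * u) * (1/u + t * (-1/u)) = (1 - t) * (1 + t)" using u by (simp add: field_simps)
      also have "\<dots> \<le> 1" using t by (simp add: algebra_simps)
      moreover have "0 \<le> 1/u + t * (-1/u)" using t u by (simp add: field_simps)
      ultimately show "(u, 1/u, 0) + t *\<^sub>R (u, -1/u, 0) \<in> Omega0" using t u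
        by (simp add: Omega0_def)
    qed
    have "blinfun_apply (DB (u, 1/u, 0)) (u, -1/u, 0) = - blinfun_apply (DB (u, 1/u, 0)) (-u, 1/u, 0)"
      using blinfun.minus_right[of "DB (u, 1/u, 0)" "(-u, 1/u, 0)"] by simp
    moreover have "0 \<le> B (0, 2/u, 0)" using H[of 0 "2/u" 0] u by (auto simp: Omega0_def)
    ultimately have "B (2*u, 0, 0) \<le> 2 * B (u, 1/u, 0)" using c1 c2 by simp
    with A Bb show ?thesis by (simp add: u_def algebra_simps)
  qed
  have "(B has_derivative blinfun_apply (DB 0)) (at ((\<lambda>t. t *\<^sub>R (1::real, 0::real, 0::real)) 0) within (\<lambda>t. t *\<^sub>R (1::real, 0::real, 0::real)) ` {0..1})"
  proof -
    have img0: "(\<lambda>t. t *\<^sub>R (1::real,0::real,0::real)) ` {0..1} \<subseteq> Omega0" by (auto simp: Omega0_def)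
    show ?thesis using has_derivative_subset[OF DB0 img0] by (simp add: zero_prod_def)
  qed
  moreover have L1: "((\<lambda>t. t *\<^sub>R (1::real,0::real,0::real)) has_derivative (\<lambda>h. h *\<^sub>R (1,0,0))) (at 0 within {0..1})"
    by (auto intro!: derivative_eq_intros simp: zero_prod_def)
  ultimately have "((\<lambda>t. B (t *\<^sub>R (1,0,0))) has_derivative (\<lambda>h. blinfun_apply (DB 0) (h *\<^sub>R (1,0,0)))) (at 0 within {0..1})"
    using has_derivative_in_compose by blast
  then have "((\<lambda>t. B (t *\<^sub>R (1,0,0))) has_derivative (\<lambda>h. h * a)) (at 0 within {0..1})"
    by (simp only: blinfun.scaleR_right a_def[symmetric] real_scaleR_def)
  then have "((\<lambda>t. B (t, 0, 0)) has_real_derivative a) (at 0 within {0..1})"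
    unfolding has_field_derivative_def by (simp add: mult.commute[of _ a])
  then have lim: "((\<lambda>y. (B (y, 0, 0) - B (0, 0, 0)) / (y - 0)) \<longlongrightarrow> a) (at 0 within {0..1})"
    by (simp add: has_field_derivative_iff)
  have "a \<le> a - c"
  proof (rule tendsto_upperbound[OF lim])
    show "\<forall>\<^sub>F y in at 0 within {0..1}. (B (y, 0, 0) - B (0, 0, 0)) / (y - 0) \<le> a - c"
      unfolding eventually_at_filter
    proof (rule always_eventually, intro allI impI)
      fix y :: real assume "y \<noteq> 0" "y \<in> {0..1}"
      then have y: "0 < y" "y \<le> 1" by auto
      have "B (0,0,0) = 0" using H[of 0 0 0] by (simp add: Omega0_def)
      with key[OF y] y show "(B (y, 0, 0) - B (0, 0, 0)) / (y - 0) \<le> a - c"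
        by (simp add: divide_le_eq mult.commute)
    qed
    show "at 0 within {0..1::real} \<noteq> bot" by (simp add: at_within_Icc_at_right)
  qed
  with assms show False by simp
qed

end
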